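(* Let $p$ be a prime number and let $q_1<q_2<q_3$ be primes such that $q_1q_2q_3$ is coprime to $p(p-1)$. (a) Let $f(x)=x^{q_1q_2}\prod_{i=1}^{q_1}(x+p^i)^{q_1q_3}(x+p^{q_1+1})^{q_2q_3}\in\mathbb{Z}[x]$. Then $R(f)$ is dense in $\mathbb{Q}_p$; and for all but finitely many primes $q$, in particular for every prime $q>p^{q_1+1}$, $R(f)$ is not dense in $\mathbb{Q}_q$. (b) Let $$g_2(x_1,x_2)=x_1^{q_1q_2}\prod_{i=1}^{q_1}(x_1+p^ix_2)^{q_1q_3}(x_1+p^{q_1+1}x_2)^{q_2q_3}\prod_{i=1}^{q_3-1}(p^ix_1+x_2)^{q_1q_2}\prod_{i=q_3}^{q_3+q_2-q_1-1}(p^ix_1+x_2)^{q_1q_3}\prod_{i=q_3+q_2-q_1}^{q_3+q_2-2}(p^ix_1+x_2)^{q_2q_3}.$$ Then $R(g_2)$ is dense in $\mathbb{Q}_p$; and for all but finitely many primes $q$, in particular for every prime $q>p^{q_3+q_2+q_1-1}$, $R(g_2)$ is not dense in $\mathbb{Q}_q$. (c) Let $n>2$ be an integer and $g_n(x_1,\ldots,x_n)=g_2(x_1,x_2)(x_3\cdots x_n)^{q_1q_2q_3}$. Then $R(g_n)$ is dense in $\mathbb{Q}_p$; and for all but finitely many primes $q$, in particular for every prime $q>p^{q_3+q_2+q_1-1}$, $R(g_n)$ is not dense in $\mathbb{Q}_q$.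
   Context: For a polynomial $h\in\mathbb{Z}[x_1,\dots,x_r]$, $R(h)=\{h(\overline{x})/h(\overline{y}) : \overline{x},\overline{y}\in\mathbb{Z}^r,\ h(\overline{y})\neq 0\}$, and density is in the $p$-adic (resp. $q$-adic) topology. *)

theory Defs
  imports "HOL-Computational_Algebra.Computational_Algebra"
begin

text \<open>p-adic valuation of a nonzero rational number (value at 0 is irrelevant below).\<close>
definition padic_val_rat :: "nat \<Rightarrow> rat \<Rightarrow> int" where
  "padic_val_rat p x = (case quotient_of x of (a, b) \<Rightarrow>
      int (multiplicity (int p) a) - int (multiplicity (int p) b))"

text \<open>A set S of rationals is dense in Q_p. Since Q is dense in Q_p, this holds iff
  every rational a is a p-adic limit of elements of S.\<close>
definition padic_dense :: "nat \<Rightarrow> rat set \<Rightarrow> bool" where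
  "padic_dense p S \<longleftrightarrow>
     (\<forall>a::rat. \<forall>k::int. \<exists>r\<in>S. r = a \<or> padic_val_rat p (r - a) \<ge> k)"

definition ratio_set :: "('a \<Rightarrow> int) \<Rightarrow> 'a set \<Rightarrow> rat set" where
  "ratio_set h D = {of_int (h x) / of_int (h y) | x y. x \<in> D \<and> y \<in> D \<and> h y \<noteq> 0}"

text \<open>Z^n as functions nat => int supported on {0..<n}; variable x_i is x (i-1).\<close>
definition int_points :: "nat \<Rightarrow> (nat \<Rightarrow> int) set" where
  "int_points n = {x. \<forall>i\<ge>n. x i = 0}"

definition poly_f :: "nat \<Rightarrow> nat \<Rightarrow> nat \<Rightarrow> nat \<Rightarrow> int \<Rightarrow> int" where
  "poly_f p q1 q2 q3 x =
     x ^ (q1*q2) * (\<Prod>i=1..q1. (x + int p ^ i) ^ (q1*q3)) * (x + int p ^ (q1+1)) ^ (q2*q3)"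

definition poly_g2 :: "nat \<Rightarrow> nat \<Rightarrow> nat \<Rightarrow> nat \<Rightarrow> int \<times> int \<Rightarrow> int" where
  "poly_g2 p q1 q2 q3 = (\<lambda>(x1, x2).
     x1 ^ (q1*q2) * (\<Prod>i=1..q1. (x1 + int p ^ i * x2) ^ (q1*q3))
     * (x1 + int p ^ (q1+1) * x2) ^ (q2*q3)
     * (\<Prod>i=1..q3-1. (int p ^ i * x1 + x2) ^ (q1*q2))
     * (\<Prod>i=q3..q3+q2-q1-1. (int p ^ i * x1 + x2) ^ (q1*q3))
     * (\<Prod>i=q3+q2-q1..q3+q2-2. (int p ^ i * x1 + x2) ^ (q2*q3)))"

definition poly_gn :: "nat \<Rightarrow> nat \<Rightarrow> nat \<Rightarrow> nat \<Rightarrow> nat \<Rightarrow> (nat \<Rightarrow> int) \<Rightarrow> int" where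
  "poly_gn p q1 q2 q3 n x =
     poly_g2 p q1 q2 q3 (x 0, x 1) * (\<Prod>i\<in>{2..<n}. x i) ^ (q1*q2*q3)"

end

theory Submission
  imports Defs "HOL-Number_Theory.Number_Theory"
begin


lemma eth_root:
  fixes p K e :: nat and c :: int
  assumes p: "prime p" and K: "K > 0" and e: "coprime e (p*(p-1))" and c: "coprime c (int p)"
  shows "\<exists>w::int. [w^e = c] (mod int p ^ K)"
proof -
  define phi where "phi = totient (p^K)"
  have phi: "phi = p^(K-1)*(p-1)" using totient_prime_power[OF p K] phi_def by simp
  have ep: "coprime e p" using e by simp
  have ep1: "coprime e (p-1)" using e by simp
  have "coprime e phi" unfolding phi using ep ep1 by simp
  then obtain e' where e': "[e*e' = Suc 0] (mod phi)" using cong_solve_coprime_nat by blast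
  have phipos: "phi > 0" unfolding phi using p prime_gt_1_nat by (simp add: prime_gt_0_nat)
  have e0: "e > 0"
  proof (rule ccontr)
    assume "\<not> e > 0"
    then have "e = 0" by simp
    then have "coprime 0 (p*(p-1))" using e by (simp only:)
    then have "is_unit (p*(p-1))" by (simp only: coprime_0_left_iff)
    then show False using p not_prime_unit is_unit_mult_iff by blast
  qed
  define e2 where "e2 = e' + phi"
  have "[e*e' + phi*e = Suc 0 + 0] (mod phi)" by (rule cong_add[OF e']) (simp add: cong_0_iff)
  then have e2: "[e*e2 = Suc 0] (mod phi)" unfolding e2_def by (simp add: algebra_simps)
  have "1 \<le> e*phi" using e0 phipos by (simp add: Suc_le_eq)
  then have "e*e2 \<ge> Suc 0" unfolding e2_def add_mult_distrib2 by linarith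
  then obtain j where j: "e*e2 = j*phi + Suc 0" using e2 cong_le_nat by blast
  define t where "t = nat (c mod (int p ^ K))"
  have pK: "int p ^ K > 0" using p prime_gt_0_nat by simp
  have tt: "int t = c mod (int p ^ K)" unfolding t_def using pK by simp
  have tc: "[int t = c] (mod int p ^ K)" unfolding tt by simp
  have "[int t = c] (mod int p)" using tc cong_dvd_modulus K
    by (metis dvd_power gr0_implies_Suc)
  then have "coprime (int t) (int p)" using c cong_imp_coprime cong_sym by blast
  then have "coprime t p" by simp
  then have "coprime t (p^K)" by simp
  then have eu: "[t ^ phi = 1] (mod p^K)" unfolding phi_def by (rule euler_theorem)
  have "[t^(e*e2) = t] (mod p^K)"
  proof -
    have "t^(e*e2) = t^(phi*j + 1)" using j by (simp add: mult.commute)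
    also have "\<dots> = (t^phi)^j * t" by (simp only: power_add power_mult power_one_right)
    finally have "t^(e*e2) = (t^phi)^j * t" .
    moreover have "[(t^phi)^j * t = 1^j * t] (mod p^K)" using eu by (intro cong_mult cong_pow) auto
    ultimately show ?thesis by simp
  qed
  then have "[int t ^(e*e2) = int t] (mod int (p^K))" using cong_int_iff by (metis of_nat_power)
  then have "[(int t ^ e2)^e = c] (mod int p ^ K)" using tc
    by (metis (no_types, lifting) cong_trans mult.commute of_nat_power power_mult)
  then show ?thesis by blast
qed

definition cp :: "(int \<Rightarrow> int) \<Rightarrow> bool" where
  "cp G \<longleftrightarrow> (\<forall>a b m. [a = b] (mod m) \<longrightarrow> [G a = G b] (mod m))"

lemma cpD: "cp G \<Longrightarrow> [a = b] (mod m) \<Longrightarrow> [G a = G b] (mod m)"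
  unfolding cp_def by blast

lemma cp_const[intro]: "cp (\<lambda>x. c)" unfolding cp_def by simp
lemma cp_id[intro]: "cp (\<lambda>x. x)" unfolding cp_def by simp
lemma cp_add[intro]: "cp f \<Longrightarrow> cp g \<Longrightarrow> cp (\<lambda>x. f x + g x)"
  unfolding cp_def by (blast intro: cong_add)
lemma cp_mult[intro]: "cp f \<Longrightarrow> cp g \<Longrightarrow> cp (\<lambda>x. f x * g x)"
  unfolding cp_def by (blast intro: cong_mult)
lemma cp_pow[intro]: "cp f \<Longrightarrow> cp (\<lambda>x. f x ^ n)"
  unfolding cp_def by (blast intro: cong_pow)
lemma cp_prod[intro]: "(\<And>i. i \<in> A \<Longrightarrow> cp (f i)) \<Longrightarrow> cp (\<lambda>x. \<Prod>i\<in>A. f i x)"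
proof (induction A rule: infinite_finite_induct)
  case (infinite A) then show ?case by auto
next
  case empty then show ?case by auto
next
  case (insert a F)
  have "cp (\<lambda>x. f a x * (\<Prod>i\<in>F. f i x))" using insert by (intro cp_mult) auto
  then show ?case using insert by simp
qed
lemma cp_lin[intro]: "cp (\<lambda>x. a * x + b)"
  using cp_add[OF cp_mult[OF cp_const cp_id] cp_const] by simp

lemma core:
  fixes p K e N :: nat and r c :: int and G h :: "int \<Rightarrow> int"
  assumes p: "prime p" and K: "K > 0" and e: "coprime e (p*(p-1))" and G: "cp G"
    and Gr: "G r \<noteq> 0" and h: "\<And>x. h x = (x - r)^e * G x"
    and N: "N \<ge> multiplicity (int p) (G r) + K" and c: "coprime c (int p)"
  shows "\<exists>w U. h (r + int p ^ N * w) = int p ^ (N*e + multiplicity (int p) (G r)) * U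
     \<and> [U = c] (mod int p ^ K) \<and> coprime U (int p)"
proof -
  define s where "s = multiplicity (int p) (G r)"
  have pp: "prime (int p)" using p by simp
  have nu: "\<not> is_unit (int p)" using pp not_prime_unit by blast
  obtain C where C: "G r = int p ^ s * C" "\<not> int p dvd C"
    unfolding s_def using multiplicity_decompose'[OF Gr nu] by blast
  have Cp: "coprime C (int p)" using C(2) pp prime_imp_coprime coprime_commute by blast
  then have "coprime C (int p ^ K)" by simp
  then obtain Ci where Ci: "[C * Ci = 1] (mod int p ^ K)" using cong_solve_coprime_int by blast
  have "coprime Ci (int p ^ K)" using Ci
    by (metis coprime_1_left coprime_mult_left_iff cong_imp_coprime cong_sym)
  then have Cip: "coprime Ci (int p)" using K by simp
  have tp: "coprime (c * Ci) (int p)" using c Cip by simp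
  obtain w where w: "[w^e = c * Ci] (mod int p ^ K)" using eth_root[OF p K e tp] by blast
  define x where "x = r + int p ^ N * w"
  have "[x = r] (mod int p ^ N)" unfolding x_def cong_iff_dvd_diff by simp
  then have "[G r = G x] (mod int p ^ N)" using cpD[OF G] cong_sym by blast
  then obtain z where z: "G x = G r + int p ^ N * z" unfolding cong_iff_lin by blast
  have Ns: "N = s + (N - s)" using N s_def by simp
  have Gx: "G x = int p ^ s * (C + int p ^ (N - s) * z)"
    using z C(1) Ns by (metis (no_types, lifting) distrib_left mult.assoc power_add)
  define U where "U = w^e * (C + int p ^ (N - s) * z)"
  have hx: "h x = int p ^ (N*e + s) * U"
    unfolding h U_def Gx by (simp add: x_def power_add power_mult_distrib power_mult algebra_simps)
  have "int p ^ K dvd int p ^ (N - s)" using N s_def by (intro le_imp_power_dvd) simp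
  then have "[C + int p ^ (N - s) * z = C] (mod int p ^ K)"
    by (simp add: cong_iff_dvd_diff)
  then have "[U = (c * Ci) * C] (mod int p ^ K)" unfolding U_def using w by (intro cong_mult)
  also have "[(c * Ci) * C = c * 1] (mod int p ^ K)"
    using Ci by (metis cong_scalar_left mult.assoc mult.commute)
  finally have Uc: "[U = c] (mod int p ^ K)" by simp
  then have "[U = c] (mod int p)" using K by (metis cong_dvd_modulus dvd_power gr0_implies_Suc)
  then have "coprime U (int p)" using c cong_imp_coprime cong_sym by blast
  then show ?thesis using hx Uc unfolding x_def s_def by blast
qed

lemma mult_decomp:
  fixes p :: nat and x :: int
  assumes p: "prime p" and x: "x \<noteq> 0"
  obtains x' where "x = int p ^ multiplicity (int p) x * x'" "coprime x' (int p)"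
proof -
  have pp: "prime (int p)" using p by simp
  have nu: "\<not> is_unit (int p)" using pp not_prime_unit by blast
  obtain C where C: "x = int p ^ multiplicity (int p) x * C" "\<not> int p dvd C"
    using multiplicity_decompose'[OF x nu] by blast
  have "coprime C (int p)" using C(2) pp prime_imp_coprime coprime_commute by blast
  then show ?thesis using that C(1) by blast
qed

lemma mult_of_decomp:
  fixes p n :: nat and x u :: int
  assumes p: "prime p" and "x = int p ^ n * u" "coprime u (int p)"
  shows "multiplicity (int p) x = n"
proof (rule multiplicity_decomposeI[OF assms(2)])
  show "\<not> int p dvd u"
  proof
    assume "int p dvd u"
    then have "is_unit (int p)" using coprime_common_divisor[OF assms(3) _ dvd_refl] by simp
    moreover have "prime (int p)" using p by simp
    ultimately show False using not_prime_unit by metis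
  qed
  show "int p \<noteq> 0" using p by simp
qed

lemma mult_ge:
  fixes p n :: nat and x :: int
  assumes p: "prime p" and "x \<noteq> 0" "int p ^ n dvd x"
  shows "n \<le> multiplicity (int p) x"
proof -
  have pp: "prime (int p)" using p by simp
  have nu: "\<not> is_unit (int p)" using pp not_prime_unit by blast
  show ?thesis using multiplicity_geI[OF assms(2) nu assms(3)] .
qed

lemma pval_frac:
  fixes p :: nat and X Y :: int
  assumes p: "prime p" and X: "X \<noteq> 0" and Y: "Y \<noteq> 0"
  shows "padic_val_rat p (of_int X / of_int Y) =
    int (multiplicity (int p) X) - int (multiplicity (int p) Y)"
proof -
  have pp: "prime_elem (int p)" using p by simp
  obtain a b where ab: "quotient_of (of_int X / of_int Y) = (a, b)" by (cases "quotient_of (of_int X / of_int Y)") auto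
  have b: "b > 0" using quotient_of_denom_pos[OF ab] .
  have "(of_int X / of_int Y :: rat) = of_int a / of_int b" using quotient_of_div[OF ab] .
  then have "(of_int X * of_int b :: rat) = of_int a * of_int Y" using b Y by (simp add: frac_eq_eq)
  then have eq: "X * b = a * Y" by (metis of_int_eq_iff of_int_mult)
  have a: "a \<noteq> 0" using eq X Y b by auto
  have "multiplicity (int p) (X * b) = multiplicity (int p) (a * Y)" using eq by simp
  then have "multiplicity (int p) X + multiplicity (int p) b = multiplicity (int p) a + multiplicity (int p) Y"
    using pp X Y a b by (simp add: prime_elem_multiplicity_mult_distrib)
  then show ?thesis unfolding padic_val_rat_def ab by simp
qed

lemma coprime_nonzero: "prime p \<Longrightarrow> coprime (V::int) (int p) \<Longrightarrow> V \<noteq> 0"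
proof
  assume "prime p" "coprime V (int p)" "V = 0"
  then have "is_unit (int p)" by simp
  moreover have "prime (int p)" using \<open>prime p\<close> by simp
  ultimately show False using not_prime_unit by metis
qed

definition root_data :: "nat \<Rightarrow> (int \<Rightarrow> int) \<Rightarrow> int \<Rightarrow> nat \<Rightarrow> (int \<Rightarrow> int) \<Rightarrow> bool" where
  "root_data p h r e G \<longleftrightarrow> coprime e (p*(p-1)) \<and> cp G \<and> G r \<noteq> 0 \<and> (\<forall>x. h x = (x-r)^e * G x)"

lemma density:
  fixes p :: nat and h :: "int \<Rightarrow> int"
  assumes p: "prime p" and h0: "h 0 = 0"
  and H: "\<And>d::int. \<exists>r e G r' e' G'. root_data p h r e G \<and> root_data p h r' e' G' \<and>
      (\<forall>L. \<exists>N M. N \<ge> L \<and> M \<ge> L \<and>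
         d = int (N*e + multiplicity (int p) (G r)) - int (M*e' + multiplicity (int p) (G' r')))"
  shows "padic_dense p (ratio_set h UNIV)"
  unfolding padic_dense_def
proof (intro allI)
  fix a :: rat and k :: int
  have pp: "prime_elem (int p)" using p by simp
  have p0: "int p \<noteq> 0" using p by simp
  have ex_y: "\<exists>y. h y \<noteq> 0"
  proof -
    obtain r e G r' e' G' where rd: "root_data p h r e G" using H[of 0] by blast
    have "\<exists>w U. h (r + int p ^ (multiplicity (int p) (G r) + 1) * w) =
       int p ^ ((multiplicity (int p) (G r) + 1)*e + multiplicity (int p) (G r)) * U
       \<and> [U = 1] (mod int p ^ 1) \<and> coprime U (int p)"
      using rd unfolding root_data_def by (intro core[OF p]) auto
    then obtain w U where "h (r + int p ^ (multiplicity (int p) (G r) + 1) * w) =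
       int p ^ ((multiplicity (int p) (G r) + 1)*e + multiplicity (int p) (G r)) * U"
       "coprime U (int p)" by blast
    then show ?thesis using coprime_nonzero[OF p] p0 by (metis mult_eq_0_iff power_eq_0_iff)
  qed
  show "\<exists>r\<in>ratio_set h UNIV. r = a \<or> k \<le> padic_val_rat p (r - a)"
  proof (cases "a = 0")
    case True
    obtain y where y: "h y \<noteq> 0" using ex_y by blast
    have "of_int (h 0) / of_int (h y) \<in> ratio_set h UNIV" unfolding ratio_set_def using y by blast
    then show ?thesis using True h0 by auto
  next
    case False
    obtain A B where AB: "quotient_of a = (A, B)" by (cases "quotient_of a") auto
    have B0: "B > 0" using quotient_of_denom_pos[OF AB] .
    have aAB: "a = of_int A / of_int B" using quotient_of_div[OF AB] .
    have A0: "A \<noteq> 0" using False aAB by auto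
    define \<alpha> where "\<alpha> = multiplicity (int p) A"
    define \<beta> where "\<beta> = multiplicity (int p) B"
    obtain A' where A': "A = int p ^ \<alpha> * A'" "coprime A' (int p)"
      using mult_decomp[OF p A0] unfolding \<alpha>_def by blast
    obtain B' where B': "B = int p ^ \<beta> * B'" "coprime B' (int p)"
      using mult_decomp[OF p] B0 unfolding \<beta>_def by (metis less_irrefl)
    define d where "d = int \<alpha> - int \<beta>"
    obtain r e G r' e' G' where rd: "root_data p h r e G" and rd': "root_data p h r' e' G'"
      and NM: "\<forall>L. \<exists>N M. N \<ge> L \<and> M \<ge> L \<and>
         d = int (N*e + multiplicity (int p) (G r)) - int (M*e' + multiplicity (int p) (G' r'))"
      using H[of d] by blast
    define K where "K = nat (k - d) + 1"
    have K0: "K > 0" unfolding K_def by simp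
    obtain N M where N0: "N \<ge> multiplicity (int p) (G r) + K + multiplicity (int p) (G' r')"
      and M0: "M \<ge> multiplicity (int p) (G r) + K + multiplicity (int p) (G' r')"
      and dNM: "d = int (N*e + multiplicity (int p) (G r)) - int (M*e' + multiplicity (int p) (G' r'))"
      using NM[rule_format, of "multiplicity (int p) (G r) + K + multiplicity (int p) (G' r')"] by blast
    have N: "N \<ge> multiplicity (int p) (G r) + K" using N0 by linarith
    have M: "M \<ge> multiplicity (int p) (G' r') + K" using M0 by linarith
    define s where "s = N*e + multiplicity (int p) (G r)"
    define t where "t = M*e' + multiplicity (int p) (G' r')"
    obtain w' V where hy: "h (r' + int p ^ M * w') = int p ^ t * V"
        and V1: "[V = 1] (mod int p ^ K)" and Vp: "coprime V (int p)"
      using core[OF p K0, of e' G' r' h M 1] rd' M unfolding root_data_def t_def by auto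
    have "coprime B' (int p ^ K)" using B'(2) by simp
    then obtain Bi where Bi: "[B' * Bi = 1] (mod int p ^ K)" using cong_solve_coprime_int by blast
    have "coprime Bi (int p ^ K)" using Bi
      by (metis coprime_1_left coprime_mult_left_iff cong_imp_coprime cong_sym)
    then have Bip: "coprime Bi (int p)" using K0 by simp
    define c where "c = A' * V * Bi"
    have cp': "coprime c (int p)" unfolding c_def using A'(2) Vp Bip by simp
    obtain w U where hx: "h (r + int p ^ N * w) = int p ^ s * U"
        and Uc: "[U = c] (mod int p ^ K)" and Up: "coprime U (int p)"
      using core[OF p K0, of e G r h N c] rd N cp' unfolding root_data_def s_def by auto
    define X where "X = h (r + int p ^ N * w)"
    define Y where "Y = h (r' + int p ^ M * w')"
    have V0: "V \<noteq> 0" using coprime_nonzero[OF p Vp] .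
    have Y0: "Y \<noteq> 0" unfolding Y_def hy using V0 p0 by simp
    have mY: "multiplicity (int p) Y = t" unfolding Y_def hy by (rule mult_of_decomp[OF p refl Vp])
    have st: "s + \<beta> = \<alpha> + t" using dNM unfolding d_def s_def t_def by linarith
    have "[B' * U = B' * c] (mod int p ^ K)" using Uc by (simp add: cong_scalar_left)
    also have "B' * c = (B' * Bi) * (A' * V)" unfolding c_def by (simp add: algebra_simps)
    also have "[(B' * Bi) * (A' * V) = 1 * (A' * V)] (mod int p ^ K)" using Bi by (intro cong_mult) auto
    finally have "[B' * U = A' * V] (mod int p ^ K)" by simp
    then obtain z where z: "B' * U - A' * V = int p ^ K * z" unfolding cong_iff_dvd_diff by (auto elim: dvdE)
    define Z where "Z = X * B - A * Y"
    have "X * B = int p ^ (s + \<beta>) * (B' * U)" unfolding X_def hx B'(1) by (simp add: power_add algebra_simps)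
    moreover have "A * Y = int p ^ (s + \<beta>) * (A' * V)" unfolding Y_def hy A'(1) st by (simp add: power_add algebra_simps)
    ultimately have "Z = int p ^ (s + \<beta>) * (B' * U - A' * V)" unfolding Z_def
      by (simp add: right_diff_distrib)
    then have Zeq: "Z = int p ^ (s + \<beta> + K) * z" unfolding z by (simp add: power_add mult.assoc)
    define r0 where "r0 = (of_int X / of_int Y :: rat)"
    have r0S: "r0 \<in> ratio_set h UNIV" unfolding r0_def ratio_set_def X_def Y_def using Y0 Y_def by blast
    have diff: "r0 - a = of_int Z / of_int (Y * B)" unfolding r0_def aAB Z_def using Y0 B0
      by (simp add: diff_frac_eq)
    show ?thesis
    proof (cases "z = 0")
      case True
      then have "r0 = a" using diff Zeq by simp
      then show ?thesis using r0S by blast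
    next
      case False
      have Z0: "Z \<noteq> 0" using Zeq False p0 by simp
      have YB0: "Y * B \<noteq> 0" using Y0 B0 by simp
      have mYB: "multiplicity (int p) (Y * B) = t + \<beta>"
        using prime_elem_multiplicity_mult_distrib[OF pp Y0] B0 mY unfolding \<beta>_def by simp
      have mZ: "s + \<beta> + K \<le> multiplicity (int p) Z" using mult_ge[OF p Z0] Zeq by simp
      have "padic_val_rat p (r0 - a) = int (multiplicity (int p) Z) - int (t + \<beta>)"
        unfolding diff pval_frac[OF p Z0 YB0] mYB ..
      moreover have "int K \<ge> k - d" unfolding K_def by simp
      ultimately have "k \<le> padic_val_rat p (r0 - a)" using mZ st unfolding d_def by linarith
      then show ?thesis using r0S by blast
    qed
  qed
qed

lemma lin_comb:
  fixes a b :: nat and z :: int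
  assumes ab: "coprime a b" and a: "a > 0" and b: "b > 0"
  shows "\<exists>N M. N \<ge> L \<and> M \<ge> L \<and> z = int a * int N - int b * int M"
proof -
  have "coprime (int a) (int b)" using ab by simp
  then obtain u v where uv: "u * int a + v * int b = 1" using bezout_int[of "int a" "int b"] by auto
  define T where "T = \<bar>z*u\<bar> + \<bar>z*v\<bar> + int L"
  define N where "N = z*u + int b * T"
  define M where "M = - (z*v) + int a * T"
  have T: "T \<ge> int L" "T \<ge> \<bar>z*u\<bar>" "T \<ge> \<bar>z*v\<bar>" unfolding T_def by auto
  have T2: "T = \<bar>z*u\<bar> + \<bar>z*v\<bar> + int L" "z*u \<ge> - \<bar>z*u\<bar>" "- (z*v) \<ge> - \<bar>z*v\<bar>"
    unfolding T_def by auto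
  have "int b * T \<ge> T" using b T by (simp add: mult_le_cancel_right1)
  then have N: "N \<ge> int L" unfolding N_def using T T2 by linarith
  have "int a * T \<ge> T" using a T by (simp add: mult_le_cancel_right1)
  then have M: "M \<ge> int L" unfolding M_def using T T2 by linarith
  have "z = int a * N - int b * M" unfolding N_def M_def
  proof -
    have "z = z * (u * int a + v * int b)" using uv by simp
    then show "z = int a * (z * u + int b * T) - int b * (- (z * v) + int a * T)"
      by (simp add: algebra_simps)
  qed
  then have "nat N \<ge> L \<and> nat M \<ge> L \<and> z = int a * int (nat N) - int b * int (nat M)"
    using N M by auto
  then show ?thesis by blast
qed

lemma choose_j:
  fixes q1 c :: nat and d :: int
  assumes q1: "prime q1" and c: "coprime c q1"
  shows "\<exists>j\<in>{1..q1}. int q1 dvd d + int c * (int j - 1)"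
proof -
  have "coprime (int c) (int q1)" using c by simp
  then obtain ci where ci: "[int c * ci = 1] (mod int q1)" using cong_solve_coprime_int by blast
  define j0 where "j0 = (- d * ci) mod int q1"
  have q0: "int q1 > 0" using q1 prime_gt_0_nat by simp
  have j0: "0 \<le> j0" "j0 < int q1" unfolding j0_def using q0 by auto
  have "[j0 = - d * ci] (mod int q1)" unfolding j0_def by (simp add: cong_def)
  then have "[int c * j0 = int c * (- d * ci)] (mod int q1)" by (rule cong_scalar_left)
  also have "int c * (- d * ci) = (int c * ci) * (- d)" by simp
  also have "[(int c * ci) * (- d) = 1 * (- d)] (mod int q1)" using ci by (intro cong_mult) auto
  finally have "[int c * j0 = - d] (mod int q1)" by simp
  then have "[d + int c * j0 = d + (- d)] (mod int q1)" by (intro cong_add) auto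
  then have dv: "int q1 dvd d + int c * j0" by (simp add: cong_0_iff)
  define j where "j = nat j0 + 1"
  have "j \<in> {1..q1}" unfolding j_def using j0 by auto
  moreover have "int j - 1 = j0" unfolding j_def using j0 by simp
  ultimately show ?thesis using dv by metis
qed

lemma mprod:
  fixes p e :: nat and f :: "nat \<Rightarrow> int" and A :: "nat set"
  assumes p: "prime p" and A: "finite A" and nz: "\<And>i. i \<in> A \<Longrightarrow> f i \<noteq> 0"
  shows "multiplicity (int p) (\<Prod>i\<in>A. f i ^ e) = e * (\<Sum>i\<in>A. multiplicity (int p) (f i))"
proof -
  have pp: "prime_elem (int p)" using p by simp
  have "multiplicity (int p) (\<Prod>i\<in>A. f i ^ e) = (\<Sum>i\<in>A. multiplicity (int p) (f i ^ e))"
    using nz A by (intro prime_elem_multiplicity_prod_distrib[OF pp]) auto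
  also have "\<dots> = (\<Sum>i\<in>A. e * multiplicity (int p) (f i))"
    using nz by (intro sum.cong refl prime_elem_multiplicity_power_distrib[OF pp]) auto
  finally show ?thesis by (simp add: sum_distrib_left)
qed

lemma pow_diff_nz:
  fixes p i j :: nat
  assumes p: "prime p" and "i \<noteq> j"
  shows "(int p ^ i - int p ^ j) \<noteq> 0"
proof -
  have "1 < int p" using prime_gt_1_nat[OF p] by simp
  then show ?thesis using assms(2) by simp
qed

lemma m_pow_diff:
  fixes p a b :: nat
  assumes p: "prime p" and ab: "b < a"
  shows "multiplicity (int p) (int p ^ a - int p ^ b) = b"
proof (rule mult_of_decomp[OF p])
  have "int p ^ a = int p ^ b * int p ^ (a - b)" using ab by (simp flip: power_add)
  then show "int p ^ a - int p ^ b = int p ^ b * (int p ^ (a - b) - 1)" by (simp add: algebra_simps)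
  have "[int p ^ (a - b) - 1 = 0 - 1] (mod int p)"
    using ab by (intro cong_diff) (auto simp: cong_0_iff)
  then show "coprime (int p ^ (a - b) - 1) (int p)"
    using cong_imp_coprime[OF cong_sym] by fastforce
qed



lemma m_mult4:
  fixes p :: nat and a b c d :: int
  assumes p: "prime p" "a \<noteq> 0" "b \<noteq> 0" "c \<noteq> 0" "d \<noteq> 0"
  shows "multiplicity (int p) (a * b * c * d) = multiplicity (int p) a + multiplicity (int p) b
     + multiplicity (int p) c + multiplicity (int p) d"
proof -
  have pp: "prime_elem (int p)" using p by simp
  show ?thesis using assms by (simp add: prime_elem_multiplicity_mult_distrib[OF pp])
qed

lemma m_mult3:
  fixes p :: nat and a b c :: int
  assumes p: "prime p" "a \<noteq> 0" "b \<noteq> 0" "c \<noteq> 0"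
  shows "multiplicity (int p) (a * b * c) = multiplicity (int p) a + multiplicity (int p) b
     + multiplicity (int p) c"
proof -
  have pp: "prime_elem (int p)" using p by simp
  show ?thesis using assms by (simp add: prime_elem_multiplicity_mult_distrib[OF pp])
qed

lemma m_ppow:
  fixes p :: nat
  assumes p: "prime p"
  shows "multiplicity (int p) ((int p ^ a) ^ b) = a * b"
proof -
  have pp: "prime_elem (int p)" using p by simp
  show ?thesis unfolding power_mult[symmetric] using multiplicity_prime_power[OF pp] .
qed

lemma m_pow:
  fixes p :: nat and a :: int
  assumes p: "prime p" "a \<noteq> 0"
  shows "multiplicity (int p) (a ^ n) = n * multiplicity (int p) a"
  using prime_elem_multiplicity_power_distrib[of "int p" a n] assms by simp

lemma Q_unit:
  fixes p :: nat and Q :: "int \<Rightarrow> int"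
  assumes p: "prime p" and Q: "cp Q" and Q0: "Q 0 = 1" and r: "int p dvd r"
  shows "Q r \<noteq> 0" "multiplicity (int p) (Q r) = 0"
proof -
  have "[r = 0] (mod int p)" using r by (simp add: cong_0_iff)
  then have "[Q r = 1] (mod int p)" using cpD[OF Q] Q0 by metis
  then have c: "coprime (Q r) (int p)" using cong_imp_coprime[OF cong_sym] coprime_1_left by blast
  show "Q r \<noteq> 0" using coprime_nonzero[OF p c] .
  show "multiplicity (int p) (Q r) = 0" using mult_of_decomp[OF p _ c, of "Q r" 0] by simp
qed

lemma inst_dense:
  fixes p q1 q2 q3 :: nat and Q h :: "int \<Rightarrow> int"
  assumes p: "prime p" and q1: "prime q1" and q2: "prime q2" and q3: "prime q3"
    and q12: "q1 < q2" and q23: "q2 < q3" and cop: "coprime (q1*q2*q3) (p*(p-1))"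
    and Q: "cp Q" and Q0: "Q 0 = 1"
    and h: "\<And>x. h x = x^(q1*q2) * (\<Prod>i=1..q1. (x + int p^i)^(q1*q3))
              * (x + int p^(q1+1))^(q2*q3) * Q x"
  shows "padic_dense p (ratio_set h UNIV)"
proof (rule density[OF p])
  have q1g: "q1 > 0" "q2 > 0" "q3 > 0" using q1 q2 q3 prime_gt_0_nat by auto
  show "h 0 = 0" unfolding h using q1g by simp
  have p1: "int p > 1" using prime_gt_1_nat[OF p] by simp
  have p0: "int p \<noteq> 0" using p1 by simp
  fix d :: int
  have "coprime q2 q1" "coprime q3 q1" using q1 q2 q3 q12 q23 by (simp_all add: primes_coprime)
  then have "coprime (q2*q3) q1" by simp
  then obtain j where j: "j \<in> {1..q1}" and jd: "int q1 dvd d + int (q2*q3) * (int j - 1)"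
    using choose_j[OF q1] by blast
  define G0 where "G0 = (\<lambda>x. (\<Prod>i=1..q1. (x + int p^i)^(q1*q3)) * (x + int p^(q1+1))^(q2*q3) * Q x)"
  define rj where "rj = - (int p ^ j)"
  define G1 where "G1 = (\<lambda>x. x^(q1*q2) * (\<Prod>i\<in>{1..q1}-{j}. (x + int p^i)^(q1*q3))
              * (x + int p^(q1+1))^(q2*q3) * Q x)"
  have cpG0: "cp G0" unfolding G0_def using Q by (intro cp_mult cp_pow cp_prod cp_add cp_id cp_const)
  have cpG1: "cp G1" unfolding G1_def using Q by (intro cp_mult cp_pow cp_prod cp_add cp_id cp_const)
  have ce: "coprime (q1*q2) (p*(p-1))" "coprime (q1*q3) (p*(p-1))" using cop by simp_all
  have hG0: "\<forall>x. h x = (x - 0)^(q1*q2) * G0 x" unfolding h G0_def by (simp add: mult.assoc)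
  have hG1: "\<forall>x. h x = (x - rj)^(q1*q3) * G1 x"
  proof
    fix x
    have "(\<Prod>i=1..q1. (x + int p^i)^(q1*q3)) = (x + int p^j)^(q1*q3) * (\<Prod>i\<in>{1..q1}-{j}. (x + int p^i)^(q1*q3))"
      using j by (intro prod.remove) auto
    then show "h x = (x - rj)^(q1*q3) * G1 x" unfolding h G1_def rj_def by (simp add: algebra_simps)
  qed
  have Qu0: "Q 0 \<noteq> 0" "multiplicity (int p) (Q 0) = 0" using Q_unit[OF p Q Q0] by auto
  have Qu1: "Q rj \<noteq> 0" "multiplicity (int p) (Q rj) = 0"
    using Q_unit[OF p Q Q0, of rj] j unfolding rj_def by (auto intro: dvd_power)
  have nzA: "\<And>i. i \<in> {1..q1} \<Longrightarrow> (0::int) + int p ^ i \<noteq> 0" using p0 by simp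
  have nzB: "(0::int) + int p ^ (q1+1) \<noteq> 0" using p0 by simp
  have mA: "multiplicity (int p) (\<Prod>i=1..q1. (0 + int p^i)^(q1*q3)) = (q1*q3) * (\<Sum>i=1..q1. i)"
    using mprod[OF p, of "{1..q1}" "\<lambda>i. 0 + int p ^ i" "q1*q3"] nzA p by simp
  have PA0: "(\<Prod>i=1..q1. (0 + int p^i)^(q1*q3)) \<noteq> 0" using p0 by simp
  have PB0: "(int p^(q1+1))^(q2*q3) \<noteq> 0" using p0 by simp
  have G00: "G0 0 = (\<Prod>i=1..q1. (0 + int p^i)^(q1*q3)) * (int p^(q1+1))^(q2*q3) * Q 0"
      unfolding G0_def by simp
  have G0nz: "G0 0 \<noteq> 0" unfolding G00 using PA0 PB0 Qu0 by simp
  have mG0: "multiplicity (int p) (G0 0) = q1*q3*(\<Sum>i=1..q1. i) + (q1+1)*(q2*q3)"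
    unfolding G00 m_mult3[OF p PA0 PB0 Qu0(1)] mA m_ppow[OF p] Qu0(2) by simp
  show "\<exists>r e G r' e' G'. root_data p h r e G \<and> root_data p h r' e' G' \<and>
      (\<forall>L. \<exists>N M. N \<ge> L \<and> M \<ge> L \<and>
         d = int (N*e + multiplicity (int p) (G r)) - int (M*e' + multiplicity (int p) (G' r')))"
  proof (intro exI conjI)
    show "root_data p h 0 (q1*q2) G0" unfolding root_data_def using ce cpG0 G0nz hG0 by blast
    have rj0: "rj \<noteq> 0" unfolding rj_def using p0 by simp
    have nzI: "\<And>i. i \<in> {1..q1}-{j} \<Longrightarrow> rj + int p ^ i \<noteq> 0"
      unfolding rj_def using pow_diff_nz[OF p] by auto
    have jq: "j < q1 + 1" using j by simp
    have rjC: "rj + int p ^ (q1+1) = int p ^ (q1+1) - int p ^ j" unfolding rj_def by simp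
    have nzC: "rj + int p ^ (q1+1) \<noteq> 0" unfolding rjC by (rule pow_diff_nz[OF p]) (use jq in simp)
    define S1 where "S1 = (\<Sum>i\<in>{1..q1}-{j}. multiplicity (int p) (rj + int p ^ i))"
    have mB: "multiplicity (int p) (\<Prod>i\<in>{1..q1}-{j}. (rj + int p^i)^(q1*q3)) = (q1*q3) * S1"
      unfolding S1_def using mprod[OF p, of "{1..q1}-{j}" "\<lambda>i. rj + int p ^ i" "q1*q3"] nzI by simp
    have PB: "(\<Prod>i\<in>{1..q1}-{j}. (rj + int p^i)^(q1*q3)) \<noteq> 0" using nzI by simp
    have mrj: "multiplicity (int p) rj = j"
      by (rule mult_of_decomp[OF p, of _ _ "-1"]) (simp_all add: rj_def)
    have mC: "multiplicity (int p) (rj + int p ^ (q1+1)) = j"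
      unfolding rjC using m_pow_diff[OF p jq] .
    have G1r: "G1 rj = rj^(q1*q2) * (\<Prod>i\<in>{1..q1}-{j}. (rj + int p^i)^(q1*q3))
              * (rj + int p^(q1+1))^(q2*q3) * Q rj" unfolding G1_def by simp
    have nz1: "rj^(q1*q2) \<noteq> 0" "(rj + int p^(q1+1))^(q2*q3) \<noteq> 0" using rj0 nzC by simp_all
    have G1nz: "G1 rj \<noteq> 0" unfolding G1r using nz1 PB Qu1 by simp
    have mG1: "multiplicity (int p) (G1 rj) = q1*q2*j + q1*q3*S1 + q2*q3*j"
      unfolding G1r m_mult4[OF p nz1(1) PB nz1(2) Qu1(1)] mB m_pow[OF p rj0] m_pow[OF p nzC] mrj mC Qu1(2)
      by simp
    show "root_data p h rj (q1*q3) G1" unfolding root_data_def using ce cpG1 G1nz hG1 by blast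
    obtain k0 where k0: "d + int (q2*q3) * (int j - 1) = int q1 * k0" using jd by (auto elim: dvdE)
    define z where "z = k0 - int q3 * int (\<Sum>i=1..q1. i) - int q2 * int q3 + int q2 * int j + int q3 * int S1"
    have "coprime q2 q3" using q2 q3 q23 by (simp add: primes_coprime)
    show "\<forall>L. \<exists>N M. N \<ge> L \<and> M \<ge> L \<and>
         d = int (N*(q1*q2) + multiplicity (int p) (G0 0)) - int (M*(q1*q3) + multiplicity (int p) (G1 rj))"
    proof
      fix L
      obtain N M where NM: "N \<ge> L" "M \<ge> L" "z = int q2 * int N - int q3 * int M"
        using lin_comb[OF \<open>coprime q2 q3\<close>] q1g by blast
      have "d = int (N*(q1*q2) + multiplicity (int p) (G0 0)) - int (M*(q1*q3) + multiplicity (int p) (G1 rj))"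
      proof -
        have "int q1 * z = int q1 * (int q2 * int N - int q3 * int M)" using NM(3) by simp
        then show ?thesis unfolding mG0 mG1 z_def using k0 by (simp add: algebra_simps)
      qed
      then show "\<exists>N M. N \<ge> L \<and> M \<ge> L \<and>
         d = int (N*(q1*q2) + multiplicity (int p) (G0 0)) - int (M*(q1*q3) + multiplicity (int p) (G1 rj))"
        using NM by blast
    qed
  qed
qed



definition Eset :: "nat \<Rightarrow> nat \<Rightarrow> nat \<Rightarrow> nat \<Rightarrow> bool" where
  "Eset q1 q2 q3 n \<longleftrightarrow> q1*q2 dvd n \<or> q1*q3 dvd n \<or> q2*q3 dvd n"

lemma E_gap:
  assumes q: "prime q1" "prime q2" "prime q3" and a: "Eset q1 q2 q3 a" and b: "Eset q1 q2 q3 b"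
  shows "a \<noteq> b + 1"
proof
  assume ab: "a = b + 1"
  have "\<exists>c. prime c \<and> c dvd a \<and> c dvd b"
    using a b q unfolding Eset_def by (meson dvd_mult_left dvd_mult_right)
  then obtain c where c: "prime c" "c dvd b + 1" "c dvd b" using ab by blast
  then have "c dvd 1" using dvd_add_right_iff[OF c(3), of 1] by blast
  then show False using c(1) by simp
qed

lemma m_neg_q:
  fixes q :: nat assumes q: "prime q"
  shows "multiplicity (int q) (- int q) = 1"
  by (rule mult_of_decomp[OF q, of _ _ "-1"]) simp_all

lemma nondense:
  fixes q q1 q2 q3 :: nat and h :: "'a \<Rightarrow> int" and D :: "'a set"
  assumes q: "prime q" and qs: "prime q1" "prime q2" "prime q3"
    and HE: "\<And>x. x \<in> D \<Longrightarrow> h x \<noteq> 0 \<Longrightarrow> Eset q1 q2 q3 (multiplicity (int q) (h x))"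
  shows "\<not> padic_dense q (ratio_set h D)"
proof
  assume "padic_dense q (ratio_set h D)"
  then obtain r where rS: "r \<in> ratio_set h D" and r: "r = of_int (int q) \<or> 2 \<le> padic_val_rat q (r - of_int (int q))"
    unfolding padic_dense_def by blast
  obtain x y where xy: "r = of_int (h x) / of_int (h y)" "x \<in> D" "y \<in> D" "h y \<noteq> 0"
    using rS unfolding ratio_set_def by blast
  have pp: "prime_elem (int q)" using q by simp
  have q0: "int q \<noteq> 0" using q by simp
  define X where "X = h x"
  define Y where "Y = h y"
  have Y0: "Y \<noteq> 0" using xy Y_def by simp
  show False
  proof (cases "X = 0")
    case True
    then have r0: "r = 0" using xy X_def by simp
    have "r \<noteq> of_int (int q)" using r0 q0 by simp
    moreover have "r - of_int (int q) = of_int (- int q) / of_int 1" using r0 by simp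
    then have "padic_val_rat q (r - of_int (int q)) = 1"
      using pval_frac[OF q, of "- int q" 1] q0 m_neg_q[OF q] by simp
    ultimately show False using r by simp
  next
    case False
    define mx where "mx = multiplicity (int q) X"
    define my where "my = multiplicity (int q) Y"
    have Ex: "Eset q1 q2 q3 mx" using HE[OF xy(2)] False unfolding mx_def X_def by simp
    have Ey: "Eset q1 q2 q3 my" using HE[OF xy(3)] Y0 unfolding my_def Y_def by simp
    have gap: "mx \<noteq> my + 1" using E_gap[OF qs Ex Ey] .
    have mqY: "multiplicity (int q) (int q * Y) = my + 1"
      using prime_elem_multiplicity_mult_distrib[OF pp q0 Y0] multiplicity_prime[OF pp] my_def by simp
    have rne: "r \<noteq> of_int (int q)"
    proof
      assume "r = of_int (int q)"
      then have "(of_int X :: rat) = of_int (int q) * of_int Y" using xy(1) Y0 X_def Y_def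
        by (simp add: divide_eq_eq)
      then have "X = int q * Y" by (metis of_int_eq_iff of_int_mult)
      then show False using gap mqY mx_def by simp
    qed
    define Z where "Z = X - int q * Y"
    have Z0: "Z \<noteq> 0"
    proof
      assume "Z = 0"
      then have "X = int q * Y" unfolding Z_def by simp
      then show False using gap mqY mx_def by simp
    qed
    have e1: "(of_int (int q) :: rat) = of_int (int q * Y) / of_int Y" using Y0 by simp
    have diff: "r - of_int (int q) = of_int Z / of_int Y"
    proof -
      have "r - of_int (int q) = of_int X / of_int Y - of_int (int q * Y) / of_int Y"
        using e1 xy(1) X_def Y_def by simp
      also have "\<dots> = of_int Z / of_int Y" unfolding Z_def by (simp only: diff_divide_distrib of_int_diff)
      finally show ?thesis .
    qed
    have "padic_val_rat q (r - of_int (int q)) = int (multiplicity (int q) Z) - int my"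
      unfolding diff pval_frac[OF q Z0 Y0] my_def ..
    moreover have "multiplicity (int q) Z < my + 2"
    proof (rule ccontr)
      assume "\<not> multiplicity (int q) Z < my + 2"
      then have dZ: "int q ^ (my + 2) dvd Z" by (intro multiplicity_dvd') simp
      have dY: "int q ^ my dvd Y" unfolding my_def by (rule multiplicity_dvd)
      then have dqY: "int q ^ (my + 1) dvd int q * Y" by (simp add: mult_dvd_mono)
      show False
      proof (cases "mx \<le> my")
        case True
        have "int q ^ (mx + 1) dvd int q ^ (my + 2)" using True by (intro le_imp_power_dvd) simp
        then have "int q ^ (mx + 1) dvd Z" using dZ by (rule dvd_trans)
        moreover have "int q ^ (mx + 1) dvd int q * Y"
          using dqY True by (metis add_le_mono1 dvd_trans le_imp_power_dvd)
        moreover have "X = Z + int q * Y" unfolding Z_def by simp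
        ultimately have "int q ^ (mx + 1) dvd X" by (simp add: dvd_add)
        then have "mx + 1 \<le> mx" using mult_ge[OF q False] mx_def by blast
        then show False by simp
      next
        case False
        then have "my + 2 \<le> mx" using gap by simp
        then have "int q ^ (my + 2) dvd X" unfolding mx_def by (intro multiplicity_dvd')
        moreover have "int q * Y = X - Z" unfolding Z_def by simp
        ultimately have "int q ^ (my + 2) dvd int q * Y" using dZ by (simp add: dvd_diff)
        then have "int q ^ (my + 1) dvd Y" using q0 by (simp add: power_Suc)
        then have "my + 1 \<le> my" using mult_ge[OF q Y0] my_def by blast
        then show False by simp
      qed
    qed
    ultimately have "padic_val_rat q (r - of_int (int q)) < 2" by simp
    then show False using r rne by simp
  qed
qed



lemma not_dvd_small:
  fixes q :: nat and D :: int
  assumes "D \<noteq> 0" "\<bar>D\<bar> < int q"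
  shows "\<not> int q dvd D"
proof
  assume "int q dvd D"
  then have "\<bar>int q\<bar> \<le> \<bar>D\<bar>" using dvd_imp_le_int[OF assms(1)] by blast
  then show False using assms(2) by simp
qed

lemma pow_lt_q:
  fixes p q a B :: nat
  assumes p: "prime p" and a: "a \<le> B" and q: "p ^ B < q"
  shows "int p ^ a < int q"
proof -
  have "p ^ a \<le> p ^ B" using a prime_gt_0_nat[OF p] by (simp add: power_increasing)
  then have "p ^ a < q" using q by simp
  then show ?thesis by (metis of_nat_less_iff of_nat_power)
qed

lemma sep_pow_diff:
  fixes p q a b B :: nat
  assumes p: "prime p" and ab: "a \<noteq> b" "a \<le> B" "b \<le> B" and q: "p ^ B < q"
  shows "\<not> int q dvd (int p ^ a - int p ^ b)"
proof (rule not_dvd_small)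
  show "int p ^ a - int p ^ b \<noteq> 0" using pow_diff_nz[OF p ab(1)] .
  have "0 < int p ^ a" "0 < int p ^ b" using p prime_gt_0_nat by auto
  moreover have "int p ^ a < int q" "int p ^ b < int q" using pow_lt_q[OF p _ q] ab by auto
  ultimately show "\<bar>int p ^ a - int p ^ b\<bar> < int q" by linarith
qed

lemma sep_pow_1:
  fixes p q a B :: nat
  assumes p: "prime p" and a: "a \<le> B" and q: "p ^ B < q"
  shows "\<not> int q dvd (int p ^ a)"
proof (rule not_dvd_small)
  show "int p ^ a \<noteq> 0" using p by simp
  have "0 < int p ^ a" using p prime_gt_0_nat by auto
  moreover have "int p ^ a < int q" using pow_lt_q[OF p a q] .
  ultimately show "\<bar>int p ^ a\<bar> < int q" by linarith
qed

lemma sep_pow_m1: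
  fixes p q a B :: nat
  assumes p: "prime p" and a: "0 < a" "a \<le> B" and q: "p ^ B < q"
  shows "\<not> int q dvd (int p ^ a - 1)"
proof -
  have "\<not> int q dvd (int p ^ a - int p ^ 0)" using sep_pow_diff[OF p _ a(2) _ q, of 0] a by simp
  then show ?thesis by simp
qed

lemma f_E:
  fixes p q q1 q2 q3 :: nat and x :: int
  assumes p: "prime p" and q: "prime q" and qs: "prime q1" "prime q2" "prime q3"
    and qb: "p ^ (q1+1) < q" and nz: "poly_f p q1 q2 q3 x \<noteq> 0"
  shows "Eset q1 q2 q3 (multiplicity (int q) (poly_f p q1 q2 q3 x))"
proof -
  define P where "P = (\<Prod>i=1..q1. (x + int p ^ i)^(q1*q3))"
  have f: "poly_f p q1 q2 q3 x = x^(q1*q2) * P * (x + int p ^ (q1+1))^(q2*q3)"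
    unfolding poly_f_def P_def ..
  have q1g: "q1 > 0" "q2 > 0" "q3 > 0" using qs prime_gt_0_nat by auto
  have x0: "x \<noteq> 0" and P0: "P \<noteq> 0" and c0: "x + int p ^ (q1+1) \<noteq> 0"
    using nz q1g unfolding f by auto
  have nzi: "\<And>i. i \<in> {1..q1} \<Longrightarrow> x + int p ^ i \<noteq> 0" using P0 q1g unfolding P_def by auto
  define a where "a = multiplicity (int q) x"
  define b where "b = (\<Sum>i=1..q1. multiplicity (int q) (x + int p ^ i))"
  define c where "c = multiplicity (int q) (x + int p ^ (q1+1))"
  have x0': "x^(q1*q2) \<noteq> 0" "(x + int p ^ (q1+1))^(q2*q3) \<noteq> 0" using x0 c0 by auto
  have m: "multiplicity (int q) (poly_f p q1 q2 q3 x) = q1*q2*a + q1*q3*b + q2*q3*c"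
  proof -
    have "multiplicity (int q) (poly_f p q1 q2 q3 x) = multiplicity (int q) (x^(q1*q2))
       + multiplicity (int q) P + multiplicity (int q) ((x + int p ^ (q1+1))^(q2*q3))"
      unfolding f by (rule m_mult3[OF q x0'(1) P0 x0'(2)])
    moreover have "multiplicity (int q) P = q1*q3*b" unfolding P_def b_def
      using mprod[OF q, of "{1..q1}" "\<lambda>i. x + int p ^ i" "q1*q3"] nzi by simp
    ultimately show ?thesis unfolding m_pow[OF q x0] m_pow[OF q c0] a_def c_def by simp
  qed
  have pos: "int q dvd z" if "multiplicity (int q) z > 0" for z
  proof (rule ccontr)
    assume "\<not> int q dvd z"
    then have "multiplicity (int q) z = 0" by (rule not_dvd_imp_multiplicity_0)
    then show False using that by simp
  qed
  have zero: "\<And>z. \<not> int q dvd z \<Longrightarrow> multiplicity (int q) z = 0"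
    by (rule not_dvd_imp_multiplicity_0)
  have bz: "b = 0" if "\<And>i. i \<in> {1..q1} \<Longrightarrow> \<not> int q dvd (x + int p ^ i)"
    unfolding b_def using that zero by simp
  have ab: "a = 0 \<or> (b = 0 \<and> c = 0)"
  proof (cases "a = 0")
    case False
    then have qx: "int q dvd x" using pos a_def by blast
    have nd: "\<not> int q dvd (x + int p ^ i)" if "i \<le> q1+1" for i
    proof
      assume "int q dvd (x + int p ^ i)"
      then have "int q dvd (x + int p ^ i) - x" using qx by (rule dvd_diff)
      then show False using sep_pow_1[OF p that qb] by simp
    qed
    then have "b = 0" using bz by auto
    moreover have "c = 0" unfolding c_def using zero nd[of "q1+1"] by blast
    ultimately show ?thesis by simp
  qed simp
  have bc: "b = 0 \<or> c = 0"
  proof (cases "b = 0")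
    case False
    then obtain i where i: "i \<in> {1..q1}" "int q dvd (x + int p ^ i)" using bz by blast
    have "\<not> int q dvd (x + int p ^ (q1+1))"
    proof
      assume "int q dvd (x + int p ^ (q1+1))"
      then have "int q dvd (x + int p ^ (q1+1)) - (x + int p ^ i)" using i(2) by (rule dvd_diff)
      then show False using sep_pow_diff[OF p _ _ _ qb, of "q1+1" i] i(1) by simp
    qed
    then show ?thesis using zero c_def by simp
  qed simp
  show ?thesis unfolding m Eset_def using ab bc
    by (auto simp: mult.assoc)
qed



lemma S1:
  fixes q :: nat and y1 y2 a :: int
  assumes prim: "\<not> (int q dvd y1 \<and> int q dvd y2)"
  shows "\<not> (int q dvd y1 \<and> int q dvd a * y1 + y2)"
proof
  assume h: "int q dvd y1 \<and> int q dvd a * y1 + y2"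
  then have "int q dvd (a * y1 + y2) - a * y1" by (intro dvd_diff) auto
  then show False using h prim by simp
qed

lemma S2:
  fixes p q i B :: nat and y1 y2 :: int
  assumes p: "prime p" and q: "prime q" and prim: "\<not> (int q dvd y1 \<and> int q dvd y2)"
    and i: "i \<le> B" and qb: "p ^ B < q"
  shows "\<not> (int q dvd y1 \<and> int q dvd y1 + int p ^ i * y2)"
proof
  assume h: "int q dvd y1 \<and> int q dvd y1 + int p ^ i * y2"
  then have "int q dvd (y1 + int p ^ i * y2) - y1" by (intro dvd_diff) auto
  then have "int q dvd int p ^ i * y2" by simp
  then have "int q dvd int p ^ i \<or> int q dvd y2" using q by (simp add: prime_dvd_mult_iff)
  then show False using sep_pow_1[OF p i qb] h prim by blast
qed

lemma S3:
  fixes p q i j B :: nat and y1 y2 :: int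
  assumes p: "prime p" and q: "prime q" and prim: "\<not> (int q dvd y1 \<and> int q dvd y2)"
    and ij: "i \<noteq> j" "i \<le> B" "j \<le> B" and qb: "p ^ B < q"
  shows "\<not> (int q dvd int p ^ i * y1 + y2 \<and> int q dvd int p ^ j * y1 + y2)"
proof
  assume h: "int q dvd int p ^ i * y1 + y2 \<and> int q dvd int p ^ j * y1 + y2"
  then have "int q dvd (int p ^ i * y1 + y2) - (int p ^ j * y1 + y2)" by (intro dvd_diff) auto
  moreover have "(int p ^ i * y1 + y2) - (int p ^ j * y1 + y2) = (int p ^ i - int p ^ j) * y1"
    by (simp add: algebra_simps)
  ultimately have "int q dvd (int p ^ i - int p ^ j) * y1" by simp
  then have "int q dvd y1" using q sep_pow_diff[OF p ij qb] by (simp add: prime_dvd_mult_iff)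
  moreover then have "int q dvd (int p ^ i * y1 + y2) - int p ^ i * y1" using h by (intro dvd_diff) auto
  ultimately show False using prim by simp
qed

lemma S4:
  fixes p q i j B :: nat and y1 y2 :: int
  assumes p: "prime p" and q: "prime q" and prim: "\<not> (int q dvd y1 \<and> int q dvd y2)"
    and ij: "0 < i + j" "i + j \<le> B" and qb: "p ^ B < q"
  shows "\<not> (int q dvd int p ^ i * y1 + y2 \<and> int q dvd y1 + int p ^ j * y2)"
proof
  assume h: "int q dvd int p ^ i * y1 + y2 \<and> int q dvd y1 + int p ^ j * y2"
  then have "int q dvd int p ^ j * (int p ^ i * y1 + y2) - (y1 + int p ^ j * y2)" by (intro dvd_diff) auto
  moreover have "int p ^ j * (int p ^ i * y1 + y2) - (y1 + int p ^ j * y2) = (int p ^ (i+j) - 1) * y1"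
    by (simp add: algebra_simps power_add)
  ultimately have "int q dvd (int p ^ (i+j) - 1) * y1" by simp
  then have "int q dvd y1" using q sep_pow_m1[OF p ij qb] by (simp add: prime_dvd_mult_iff)
  moreover then have "int q dvd (int p ^ i * y1 + y2) - int p ^ i * y1" using h by (intro dvd_diff) auto
  ultimately show False using prim by simp
qed

lemma S5:
  fixes p q i j B :: nat and y1 y2 :: int
  assumes p: "prime p" and q: "prime q" and prim: "\<not> (int q dvd y1 \<and> int q dvd y2)"
    and ij: "i \<noteq> j" "i \<le> B" "j \<le> B" and qb: "p ^ B < q"
  shows "\<not> (int q dvd y1 + int p ^ i * y2 \<and> int q dvd y1 + int p ^ j * y2)"
proof
  assume h: "int q dvd y1 + int p ^ i * y2 \<and> int q dvd y1 + int p ^ j * y2"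
  then have "int q dvd (y1 + int p ^ i * y2) - (y1 + int p ^ j * y2)" by (intro dvd_diff) auto
  moreover have "(y1 + int p ^ i * y2) - (y1 + int p ^ j * y2) = (int p ^ i - int p ^ j) * y2"
    by (simp add: algebra_simps)
  ultimately have "int q dvd (int p ^ i - int p ^ j) * y2" by simp
  then have "int q dvd y2" using q sep_pow_diff[OF p ij qb] by (simp add: prime_dvd_mult_iff)
  moreover then have "int q dvd (y1 + int p ^ i * y2) - int p ^ i * y2" using h by (intro dvd_diff) auto
  ultimately show False using prim by simp
qed

lemma m_single:
  fixes q \<mu> :: nat and a b :: int
  assumes q: "prime q" and "a = int q ^ \<mu> * b" "a \<noteq> 0"
  shows "multiplicity (int q) a = \<mu> + multiplicity (int q) b"
proof -
  have pp: "prime_elem (int q)" using q by simp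
  have b0: "b \<noteq> 0" and q0: "int q ^ \<mu> \<noteq> 0" using assms by auto
  show ?thesis unfolding assms(2) prime_elem_multiplicity_mult_distrib[OF pp q0 b0]
    multiplicity_prime_power[OF pp] ..
qed

lemma mblock:
  fixes q \<mu> e :: nat and Lx Ly :: "nat \<Rightarrow> int" and I :: "nat set"
  assumes q: "prime q" and I: "finite I" and L: "\<And>i. i \<in> I \<Longrightarrow> Lx i = int q ^ \<mu> * Ly i"
    and nz: "\<And>i. i \<in> I \<Longrightarrow> Lx i \<noteq> 0"
  shows "multiplicity (int q) (\<Prod>i\<in>I. Lx i ^ e) = e * (card I * \<mu> + (\<Sum>i\<in>I. multiplicity (int q) (Ly i)))"
proof -
  have "multiplicity (int q) (\<Prod>i\<in>I. Lx i ^ e) = e * (\<Sum>i\<in>I. multiplicity (int q) (Lx i))"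
    using mprod[OF q I, of Lx e] nz by blast
  also have "(\<Sum>i\<in>I. multiplicity (int q) (Lx i)) = (\<Sum>i\<in>I. \<mu> + multiplicity (int q) (Ly i))"
    using m_single[OF q L nz] by (intro sum.cong) auto
  also have "\<dots> = card I * \<mu> + (\<Sum>i\<in>I. multiplicity (int q) (Ly i))"
    by (simp add: sum.distrib)
  finally show ?thesis .
qed

lemma m_mult6:
  fixes p :: nat and a b c d e f :: int
  assumes p: "prime p" "a \<noteq> 0" "b \<noteq> 0" "c \<noteq> 0" "d \<noteq> 0" "e \<noteq> 0" "f \<noteq> 0"
  shows "multiplicity (int p) (a * b * c * d * e * f) = multiplicity (int p) a + multiplicity (int p) b
     + multiplicity (int p) c + multiplicity (int p) d + multiplicity (int p) e + multiplicity (int p) f"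
proof -
  have pp: "prime_elem (int p)" using p by simp
  show ?thesis using assms by (simp add: prime_elem_multiplicity_mult_distrib[OF pp])
qed



lemma g2_E:
  fixes p q q1 q2 q3 :: nat and x1 x2 :: int
  assumes p: "prime p" and q: "prime q" and qs: "prime q1" "prime q2" "prime q3"
    and q12: "q1 < q2" and q23: "q2 < q3"
    and qb: "p ^ (q3+q2+q1-1) < q" and nz: "poly_g2 p q1 q2 q3 (x1, x2) \<noteq> 0"
  shows "Eset q1 q2 q3 (multiplicity (int q) (poly_g2 p q1 q2 q3 (x1, x2)))"
proof -
  define B where "B = q3+q2+q1-1"
  have qB: "p ^ B < q" using qb B_def by simp
  have q2g: "q1 \<ge> 2" "q2 \<ge> 2" "q3 \<ge> 2" using qs prime_ge_2_nat by auto
  define IA where "IA = {1..q3-1}"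
  define IB1 where "IB1 = {1..q1}"
  define IB2 where "IB2 = {q3..q3+q2-q1-1}"
  define IC where "IC = {q3+q2-q1..q3+q2-2}"
  define PB1 where "PB1 = (\<Prod>i\<in>IB1. (x1 + int p ^ i * x2)^(q1*q3))"
  define Cx where "Cx = x1 + int p^(q1+1) * x2"
  define PA where "PA = (\<Prod>i\<in>IA. (int p ^ i * x1 + x2)^(q1*q2))"
  define PB2 where "PB2 = (\<Prod>i\<in>IB2. (int p ^ i * x1 + x2)^(q1*q3))"
  define PC where "PC = (\<Prod>i\<in>IC. (int p ^ i * x1 + x2)^(q2*q3))"
  have g: "poly_g2 p q1 q2 q3 (x1, x2) = x1^(q1*q2) * PB1 * Cx^(q2*q3) * PA * PB2 * PC"
    unfolding poly_g2_def PB1_def Cx_def PA_def PB2_def PC_def IA_def IB1_def IB2_def IC_def by simp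
  have nz6: "x1^(q1*q2) \<noteq> 0" "PB1 \<noteq> 0" "Cx^(q2*q3) \<noteq> 0" "PA \<noteq> 0" "PB2 \<noteq> 0" "PC \<noteq> 0"
    using nz unfolding g by auto
  have epos: "q1*q2 > 0" "q1*q3 > 0" "q2*q3 > 0" using q2g by auto
  have x10: "x1 \<noteq> 0" and Cx0: "Cx \<noteq> 0" using nz6 epos by auto
  have fin: "finite IA" "finite IB1" "finite IB2" "finite IC" unfolding IA_def IB1_def IB2_def IC_def by auto
  have nzB1: "\<And>i. i \<in> IB1 \<Longrightarrow> x1 + int p ^ i * x2 \<noteq> 0" using nz6(2) fin epos unfolding PB1_def by auto
  have nzA: "\<And>i. i \<in> IA \<Longrightarrow> int p ^ i * x1 + x2 \<noteq> 0" using nz6(4) fin epos unfolding PA_def by auto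
  have nzB2: "\<And>i. i \<in> IB2 \<Longrightarrow> int p ^ i * x1 + x2 \<noteq> 0" using nz6(5) fin epos unfolding PB2_def by auto
  have nzC: "\<And>i. i \<in> IC \<Longrightarrow> int p ^ i * x1 + x2 \<noteq> 0" using nz6(6) fin epos unfolding PC_def by auto
  define gg where "gg = gcd x1 x2"
  have gg0: "gg \<noteq> 0" unfolding gg_def using x10 by simp
  define \<mu> where "\<mu> = multiplicity (int q) gg"
  have dg: "int q ^ \<mu> dvd gg" unfolding \<mu>_def by (rule multiplicity_dvd)
  obtain y1 where y1: "x1 = int q ^ \<mu> * y1" using dvd_trans[OF dg[unfolded gg_def] gcd_dvd1[of x1 x2]] by (auto elim: dvdE)
  obtain y2 where y2: "x2 = int q ^ \<mu> * y2" using dvd_trans[OF dg[unfolded gg_def] gcd_dvd2[of x1 x2]] by (auto elim: dvdE)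
  have prim: "\<not> (int q dvd y1 \<and> int q dvd y2)"
  proof
    assume "int q dvd y1 \<and> int q dvd y2"
    then have "int q ^ (\<mu>+1) dvd x1" "int q ^ (\<mu>+1) dvd x2" unfolding y1 y2 by (auto simp: mult_dvd_mono)
    then have "int q ^ (\<mu>+1) dvd gg" unfolding gg_def by simp
    then have "\<mu> + 1 \<le> \<mu>" using mult_ge[OF q gg0] \<mu>_def by blast
    then show False by simp
  qed
  define SA where "SA = (\<Sum>i\<in>IA. multiplicity (int q) (int p ^ i * y1 + y2))"
  define SB1 where "SB1 = (\<Sum>i\<in>IB1. multiplicity (int q) (y1 + int p ^ i * y2))"
  define SB2 where "SB2 = (\<Sum>i\<in>IB2. multiplicity (int q) (int p ^ i * y1 + y2))"
  define SC where "SC = (\<Sum>i\<in>IC. multiplicity (int q) (int p ^ i * y1 + y2))"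
  define mC where "mC = multiplicity (int q) (y1 + int p^(q1+1) * y2)"
  define my1 where "my1 = multiplicity (int q) y1"
  have LP: "\<And>i. int p ^ i * x1 + x2 = int q ^ \<mu> * (int p ^ i * y1 + y2)" unfolding y1 y2 by (simp add: algebra_simps)
  have LX: "\<And>i. x1 + int p ^ i * x2 = int q ^ \<mu> * (y1 + int p ^ i * y2)" unfolding y1 y2 by (simp add: algebra_simps)
  have m1: "multiplicity (int q) (x1^(q1*q2)) = q1*q2*(\<mu> + my1)"
    unfolding m_pow[OF q x10] m_single[OF q y1 x10] my1_def ..
  have m2: "multiplicity (int q) PB1 = q1*q3*(card IB1 * \<mu> + SB1)"
    unfolding PB1_def SB1_def by (rule mblock[OF q fin(2) LX nzB1])
  have m3: "multiplicity (int q) (Cx^(q2*q3)) = q2*q3*(\<mu> + mC)"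
  proof -
    have cx: "Cx = int q ^ \<mu> * (y1 + int p^(q1+1) * y2)" unfolding Cx_def by (rule LX)
    have "multiplicity (int q) Cx = \<mu> + mC" unfolding mC_def by (rule m_single[OF q cx Cx0])
    then show ?thesis by (simp only: m_pow[OF q Cx0])
  qed
  have m4: "multiplicity (int q) PA = q1*q2*(card IA * \<mu> + SA)"
    unfolding PA_def SA_def by (rule mblock[OF q fin(1) LP nzA])
  have m5: "multiplicity (int q) PB2 = q1*q3*(card IB2 * \<mu> + SB2)"
    unfolding PB2_def SB2_def by (rule mblock[OF q fin(3) LP nzB2])
  have m6: "multiplicity (int q) PC = q2*q3*(card IC * \<mu> + SC)"
    unfolding PC_def SC_def by (rule mblock[OF q fin(4) LP nzC])
  have cards: "card IA = q3 - 1" "card IB1 = q1" "card IB2 = q2 - q1" "card IC = q1 - 1"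
    unfolding IA_def IB1_def IB2_def IC_def using q2g q12 q23 by auto
  have c1: "\<mu> + (q3 - 1) * \<mu> = q3 * \<mu>" using q2g by (cases q3) auto
  have c2: "q1 * \<mu> + (q2 - q1) * \<mu> = q2 * \<mu>" using q12 by (metis add_mult_distrib le_add_diff_inverse less_imp_le)
  have c3: "\<mu> + (q1 - 1) * \<mu> = q1 * \<mu>" using q2g by (cases q1) auto
  define A where "A = my1 + SA"
  define Bs where "Bs = SB1 + SB2"
  define C where "C = mC + SC"
  have mtot: "multiplicity (int q) (poly_g2 p q1 q2 q3 (x1, x2)) =
      q1*q2*(\<mu> + (q3-1)*\<mu>) + q1*q3*(q1*\<mu> + (q2-q1)*\<mu>) + q2*q3*(\<mu> + (q1-1)*\<mu>)
      + q1*q2*A + q1*q3*Bs + q2*q3*C"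
    unfolding g m_mult6[OF q nz6] m1 m2 m3 m4 m5 m6 cards A_def Bs_def C_def
    by (simp add: algebra_simps)
  have mtot2: "multiplicity (int q) (poly_g2 p q1 q2 q3 (x1, x2)) =
      q1*q2*q3*(3*\<mu>) + q1*q2*A + q1*q3*Bs + q2*q3*C"
    unfolding mtot c1 c2 c3 by (simp add: algebra_simps)
  define fA where "fA \<longleftrightarrow> int q dvd y1 \<or> (\<exists>i\<in>IA. int q dvd int p ^ i * y1 + y2)"
  define fB where "fB \<longleftrightarrow> (\<exists>i\<in>IB1. int q dvd y1 + int p ^ i * y2) \<or> (\<exists>i\<in>IB2. int q dvd int p ^ i * y1 + y2)"
  define fC where "fC \<longleftrightarrow> int q dvd y1 + int p^(q1+1) * y2 \<or> (\<exists>i\<in>IC. int q dvd int p ^ i * y1 + y2)"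
  have zero: "\<And>z. \<not> int q dvd z \<Longrightarrow> multiplicity (int q) z = 0"
    by (rule not_dvd_imp_multiplicity_0)
  have A0: "A = 0" if "\<not> fA" using that zero unfolding A_def fA_def my1_def SA_def by simp
  have B0: "Bs = 0" if "\<not> fB" using that zero unfolding Bs_def fB_def SB1_def SB2_def by simp
  have C0: "C = 0" if "\<not> fC" using that zero unfolding C_def fC_def mC_def SC_def by simp
  have AB: "\<not> (fA \<and> fB)"
  proof
    assume h: "fA \<and> fB"
    show False
    proof (cases "int q dvd y1")
      case True
      show False using h unfolding fB_def
      proof (elim conjE disjE bexE)
        fix i assume i: "i \<in> IB1" "int q dvd y1 + int p ^ i * y2"
        have bd: "i \<le> B" using i q2g unfolding IB1_def B_def by auto
        show False using S2[OF p q prim bd qB] True i by blast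
      next
        fix i assume "i \<in> IB2" "int q dvd int p ^ i * y1 + y2"
        then show False using S1[OF prim, of "int p ^ i"] True by auto
      qed
    next
      case False
      then obtain i where i: "i \<in> IA" "int q dvd int p ^ i * y1 + y2" using h unfolding fA_def by auto
      show False using h unfolding fB_def
      proof (elim conjE disjE bexE)
        fix j assume j: "j \<in> IB1" "int q dvd y1 + int p ^ j * y2"
        have bd: "0 < i + j" "i + j \<le> B" using i j q2g unfolding IA_def IB1_def B_def by auto
        show False using S4[OF p q prim bd qB] i j by blast
      next
        fix j assume j: "j \<in> IB2" "int q dvd int p ^ j * y1 + y2"
        have bd: "i \<noteq> j" "i \<le> B" "j \<le> B" using i j q2g q12 q23 unfolding IA_def IB2_def B_def by auto
        show False using S3[OF p q prim bd qB] i j by blast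
      qed
    qed
  qed
  have AC: "\<not> (fA \<and> fC)"
  proof
    assume h: "fA \<and> fC"
    show False
    proof (cases "int q dvd y1")
      case True
      show False using h unfolding fC_def
      proof (elim conjE disjE bexE)
        assume c: "int q dvd y1 + int p ^ (q1+1) * y2"
        have bd: "q1 + 1 \<le> B" using q2g unfolding B_def by auto
        show False using S2[OF p q prim bd qB] True c by blast
      next
        fix i assume "i \<in> IC" "int q dvd int p ^ i * y1 + y2"
        then show False using S1[OF prim, of "int p ^ i"] True by auto
      qed
    next
      case False
      then obtain i where i: "i \<in> IA" "int q dvd int p ^ i * y1 + y2" using h unfolding fA_def by auto
      show False using h unfolding fC_def
      proof (elim conjE disjE bexE)
        assume c: "int q dvd y1 + int p ^ (q1+1) * y2"
        have bd: "0 < i + (q1+1)" "i + (q1+1) \<le> B" using i q2g unfolding IA_def B_def by auto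
        show False using S4[OF p q prim bd qB] i c by blast
      next
        fix j assume j: "j \<in> IC" "int q dvd int p ^ j * y1 + y2"
        have bd: "i \<noteq> j" "i \<le> B" "j \<le> B" using i j q2g q12 q23 unfolding IA_def IC_def B_def by auto
        show False using S3[OF p q prim bd qB] i j by blast
      qed
    qed
  qed
  have BC: "\<not> (fB \<and> fC)"
  proof
    assume h: "fB \<and> fC"
    show False using h unfolding fB_def
    proof (elim conjE disjE bexE)
      fix i assume i: "i \<in> IB1" "int q dvd y1 + int p ^ i * y2"
      show False using h unfolding fC_def
      proof (elim conjE disjE bexE)
        assume c: "int q dvd y1 + int p ^ (q1+1) * y2"
        have bd: "i \<noteq> q1+1" "i \<le> B" "q1+1 \<le> B" using i q2g unfolding IB1_def B_def by auto
        show False using S5[OF p q prim bd qB] i c by blast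
      next
        fix j assume j: "j \<in> IC" "int q dvd int p ^ j * y1 + y2"
        have bd: "0 < j + i" "j + i \<le> B" using i j q2g q12 q23 unfolding IB1_def IC_def B_def by auto
        show False using S4[OF p q prim bd qB] i j by blast
      qed
    next
      fix i assume i: "i \<in> IB2" "int q dvd int p ^ i * y1 + y2"
      show False using h unfolding fC_def
      proof (elim conjE disjE bexE)
        assume c: "int q dvd y1 + int p ^ (q1+1) * y2"
        have bd: "0 < i + (q1+1)" "i + (q1+1) \<le> B" using i q2g q12 q23 unfolding IB2_def B_def by auto
        show False using S4[OF p q prim bd qB] i c by blast
      next
        fix j assume j: "j \<in> IC" "int q dvd int p ^ j * y1 + y2"
        have bd: "i \<noteq> j" "i \<le> B" "j \<le> B" using i j q2g q12 q23 unfolding IB2_def IC_def B_def by auto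
        show False using S3[OF p q prim bd qB] i j by blast
      qed
    qed
  qed
  have "(Bs = 0 \<and> C = 0) \<or> (A = 0 \<and> C = 0) \<or> (A = 0 \<and> Bs = 0)"
    using AB AC BC A0 B0 C0 by blast
  then show ?thesis unfolding mtot2 Eset_def
  proof (elim disjE conjE)
    assume "Bs = 0" "C = 0"
    then show "q1*q2 dvd q1*q2*q3*(3*\<mu>) + q1*q2*A + q1*q3*Bs + q2*q3*C \<or>
        q1*q3 dvd q1*q2*q3*(3*\<mu>) + q1*q2*A + q1*q3*Bs + q2*q3*C \<or>
        q2*q3 dvd q1*q2*q3*(3*\<mu>) + q1*q2*A + q1*q3*Bs + q2*q3*C"
      by (simp add: mult.assoc)
  next
    assume "A = 0" "C = 0"
    then have "q1*q2*q3*(3*\<mu>) + q1*q2*A + q1*q3*Bs + q2*q3*C = q1*q3*(q2*(3*\<mu>) + Bs)"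
      by (simp add: algebra_simps)
    then show "q1*q2 dvd q1*q2*q3*(3*\<mu>) + q1*q2*A + q1*q3*Bs + q2*q3*C \<or>
        q1*q3 dvd q1*q2*q3*(3*\<mu>) + q1*q2*A + q1*q3*Bs + q2*q3*C \<or>
        q2*q3 dvd q1*q2*q3*(3*\<mu>) + q1*q2*A + q1*q3*Bs + q2*q3*C"
      by (metis dvd_triv_left)
  next
    assume "A = 0" "Bs = 0"
    then have "q1*q2*q3*(3*\<mu>) + q1*q2*A + q1*q3*Bs + q2*q3*C = q2*q3*(q1*(3*\<mu>) + C)"
      by (simp add: algebra_simps)
    then show "q1*q2 dvd q1*q2*q3*(3*\<mu>) + q1*q2*A + q1*q3*Bs + q2*q3*C \<or>
        q1*q3 dvd q1*q2*q3*(3*\<mu>) + q1*q2*A + q1*q3*Bs + q2*q3*C \<or>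
        q2*q3 dvd q1*q2*q3*(3*\<mu>) + q1*q2*A + q1*q3*Bs + q2*q3*C"
      by (metis dvd_triv_left)
  qed
qed



lemma dense_mono: "padic_dense p S \<Longrightarrow> S \<subseteq> T \<Longrightarrow> padic_dense p T"
  unfolding padic_dense_def by blast

lemma Eset_add: "Eset q1 q2 q3 a \<Longrightarrow> Eset q1 q2 q3 (a + q1*q2*q3*k)"
  unfolding Eset_def
  by (metis dvd_add dvd_mult2 dvd_triv_left mult.assoc mult.commute)

lemma gn_E:
  fixes p q q1 q2 q3 n :: nat and x :: "nat \<Rightarrow> int"
  assumes p: "prime p" and q: "prime q" and qs: "prime q1" "prime q2" "prime q3"
    and q12: "q1 < q2" and q23: "q2 < q3"
    and qb: "p ^ (q3+q2+q1-1) < q" and nz: "poly_gn p q1 q2 q3 n x \<noteq> 0"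
  shows "Eset q1 q2 q3 (multiplicity (int q) (poly_gn p q1 q2 q3 n x))"
proof -
  define P where "P = (\<Prod>i\<in>{2..<n}. x i)"
  have gn: "poly_gn p q1 q2 q3 n x = poly_g2 p q1 q2 q3 (x 0, x 1) * P ^ (q1*q2*q3)"
    unfolding poly_gn_def P_def ..
  have nz1: "poly_g2 p q1 q2 q3 (x 0, x 1) \<noteq> 0" and nz2: "P ^ (q1*q2*q3) \<noteq> 0" using nz unfolding gn by auto
  have pos: "q1*q2*q3 > 0" using qs prime_gt_0_nat by simp
  have P0: "P \<noteq> 0"
  proof
    assume "P = 0"
    then have "P ^ (q1*q2*q3) = 0" using pos by simp
    then show False using nz2 by simp
  qed
  have pp: "prime_elem (int q)" using q by simp
  have "multiplicity (int q) (poly_gn p q1 q2 q3 n x) =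
      multiplicity (int q) (poly_g2 p q1 q2 q3 (x 0, x 1)) + q1*q2*q3*multiplicity (int q) P"
    unfolding gn prime_elem_multiplicity_mult_distrib[OF pp nz1 nz2] m_pow[OF q P0] ..
  then show ?thesis using Eset_add[OF g2_E[OF p q qs q12 q23 qb nz1]] by simp
qed

theorem theorem4p8:
  fixes p q1 q2 q3 :: nat
  assumes "prime p" "prime q1" "prime q2" "prime q3"
    and "q1 < q2" "q2 < q3"
    and "coprime (q1*q2*q3) (p*(p-1))"
  shows
    "(padic_dense p (ratio_set (poly_f p q1 q2 q3) UNIV)
      \<and> finite {q. prime q \<and> padic_dense q (ratio_set (poly_f p q1 q2 q3) UNIV)}
      \<and> (\<forall>q. prime q \<and> q > p ^ (q1+1) \<longrightarrow>
            \<not> padic_dense q (ratio_set (poly_f p q1 q2 q3) UNIV)))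
   \<and> (padic_dense p (ratio_set (poly_g2 p q1 q2 q3) UNIV)
      \<and> finite {q. prime q \<and> padic_dense q (ratio_set (poly_g2 p q1 q2 q3) UNIV)}
      \<and> (\<forall>q. prime q \<and> q > p ^ (q3+q2+q1-1) \<longrightarrow>
            \<not> padic_dense q (ratio_set (poly_g2 p q1 q2 q3) UNIV)))
   \<and> (\<forall>n>2.
        padic_dense p (ratio_set (poly_gn p q1 q2 q3 n) (int_points n))
      \<and> finite {q. prime q \<and> padic_dense q (ratio_set (poly_gn p q1 q2 q3 n) (int_points n))}
      \<and> (\<forall>q. prime q \<and> q > p ^ (q3+q2+q1-1) \<longrightarrow>
            \<not> padic_dense q (ratio_set (poly_gn p q1 q2 q3 n) (int_points n))))"
proof -
  note p = assms(1) and qs = assms(2-4) and q12 = assms(5) and q23 = assms(6) and cop = assms(7)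
  define B where "B = q3+q2+q1-1"
  have fd: "padic_dense p (ratio_set (poly_f p q1 q2 q3) UNIV)"
    by (rule inst_dense[OF p qs q12 q23 cop, of "\<lambda>x. 1"]) (auto simp: poly_f_def)
  have fnd: "\<forall>q. prime q \<and> q > p ^ (q1+1) \<longrightarrow> \<not> padic_dense q (ratio_set (poly_f p q1 q2 q3) UNIV)"
  proof (intro allI impI)
    fix q assume q: "prime q \<and> q > p ^ (q1+1)"
    show "\<not> padic_dense q (ratio_set (poly_f p q1 q2 q3) UNIV)"
      by (rule nondense[of q q1 q2 q3]) (use q qs f_E[OF p _ qs] in auto)
  qed
  have ffin: "finite {q. prime q \<and> padic_dense q (ratio_set (poly_f p q1 q2 q3) UNIV)}"
    by (rule finite_subset[of _ "{..p ^ (q1+1)}"]) (use fnd in \<open>auto simp: not_less[symmetric]\<close>)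
  define Q where "Q = (\<lambda>x::int. (\<Prod>i=1..q3-1. (int p ^ i * x + 1) ^ (q1*q2))
     * (\<Prod>i=q3..q3+q2-q1-1. (int p ^ i * x + 1) ^ (q1*q3))
     * (\<Prod>i=q3+q2-q1..q3+q2-2. (int p ^ i * x + 1) ^ (q2*q3)))"
  have cpQ: "cp Q" unfolding Q_def by (intro cp_mult cp_pow cp_prod cp_add cp_id cp_const)
  have Q0: "Q 0 = 1" unfolding Q_def by simp
  have gd1: "padic_dense p (ratio_set (\<lambda>x. poly_g2 p q1 q2 q3 (x, 1)) UNIV)"
    by (rule inst_dense[OF p qs q12 q23 cop cpQ Q0]) (simp add: poly_g2_def Q_def mult.assoc)
  have sub1: "ratio_set (\<lambda>x. poly_g2 p q1 q2 q3 (x, 1)) UNIV \<subseteq> ratio_set (poly_g2 p q1 q2 q3) UNIV"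
    unfolding ratio_set_def by blast
  have gd: "padic_dense p (ratio_set (poly_g2 p q1 q2 q3) UNIV)" by (rule dense_mono[OF gd1 sub1])
  have gnd: "\<forall>q. prime q \<and> q > p ^ (q3+q2+q1-1) \<longrightarrow> \<not> padic_dense q (ratio_set (poly_g2 p q1 q2 q3) UNIV)"
  proof (intro allI impI)
    fix q assume q: "prime q \<and> q > p ^ (q3+q2+q1-1)"
    show "\<not> padic_dense q (ratio_set (poly_g2 p q1 q2 q3) UNIV)"
    proof (rule nondense[of q q1 q2 q3])
      fix x :: "int \<times> int" assume "poly_g2 p q1 q2 q3 x \<noteq> 0"
      then show "Eset q1 q2 q3 (multiplicity (int q) (poly_g2 p q1 q2 q3 x))"
        using g2_E[OF p _ qs q12 q23, of q "fst x" "snd x"] q by simp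
    qed (use q qs in auto)
  qed
  have gfin: "finite {q. prime q \<and> padic_dense q (ratio_set (poly_g2 p q1 q2 q3) UNIV)}"
    by (rule finite_subset[of _ "{..p ^ (q3+q2+q1-1)}"]) (use gnd in \<open>auto simp: not_less[symmetric]\<close>)
  have partc: "padic_dense p (ratio_set (poly_gn p q1 q2 q3 n) (int_points n))
      \<and> finite {q. prime q \<and> padic_dense q (ratio_set (poly_gn p q1 q2 q3 n) (int_points n))}
      \<and> (\<forall>q. prime q \<and> q > p ^ (q3+q2+q1-1) \<longrightarrow>
            \<not> padic_dense q (ratio_set (poly_gn p q1 q2 q3 n) (int_points n)))" if n: "n > 2" for n
  proof -
    define pt where "pt = (\<lambda>(x::int) (i::nat). if i = 0 then x else if i < n then 1 else (0::int))"
    have ptI: "pt x \<in> int_points n" for x unfolding pt_def int_points_def using n by auto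
    have ptv: "poly_gn p q1 q2 q3 n (pt x) = poly_g2 p q1 q2 q3 (x, 1)" for x
    proof -
      have "(\<Prod>i\<in>{2..<n}. pt x i) = 1" unfolding pt_def by (intro prod.neutral) auto
      moreover have "pt x 0 = x" "pt x 1 = 1" unfolding pt_def using n by auto
      ultimately show ?thesis unfolding poly_gn_def by simp
    qed
    have sub: "ratio_set (\<lambda>x. poly_g2 p q1 q2 q3 (x, 1)) UNIV \<subseteq> ratio_set (poly_gn p q1 q2 q3 n) (int_points n)"
    proof
      fix r assume "r \<in> ratio_set (\<lambda>x. poly_g2 p q1 q2 q3 (x, 1)) UNIV"
      then obtain x y where xy: "r = of_int (poly_g2 p q1 q2 q3 (x, 1)) / of_int (poly_g2 p q1 q2 q3 (y, 1))"
        "poly_g2 p q1 q2 q3 (y, 1) \<noteq> 0" unfolding ratio_set_def by blast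
      have "r = of_int (poly_gn p q1 q2 q3 n (pt x)) / of_int (poly_gn p q1 q2 q3 n (pt y))
         \<and> pt x \<in> int_points n \<and> pt y \<in> int_points n \<and> poly_gn p q1 q2 q3 n (pt y) \<noteq> 0"
        unfolding ptv using xy ptI by simp
      then show "r \<in> ratio_set (poly_gn p q1 q2 q3 n) (int_points n)"
        unfolding ratio_set_def by blast
    qed
    have d: "padic_dense p (ratio_set (poly_gn p q1 q2 q3 n) (int_points n))" by (rule dense_mono[OF gd1 sub])
    have nd: "\<forall>q. prime q \<and> q > p ^ (q3+q2+q1-1) \<longrightarrow>
            \<not> padic_dense q (ratio_set (poly_gn p q1 q2 q3 n) (int_points n))"
    proof (intro allI impI)
      fix q assume q: "prime q \<and> q > p ^ (q3+q2+q1-1)"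
      show "\<not> padic_dense q (ratio_set (poly_gn p q1 q2 q3 n) (int_points n))"
      proof (rule nondense[of q q1 q2 q3])
        fix x assume "poly_gn p q1 q2 q3 n x \<noteq> 0"
        then show "Eset q1 q2 q3 (multiplicity (int q) (poly_gn p q1 q2 q3 n x))"
          using gn_E[OF p _ qs q12 q23] q by blast
      qed (use q qs in auto)
    qed
    have fin: "finite {q. prime q \<and> padic_dense q (ratio_set (poly_gn p q1 q2 q3 n) (int_points n))}"
      by (rule finite_subset[of _ "{..p ^ (q3+q2+q1-1)}"]) (use nd in \<open>auto simp: not_less[symmetric]\<close>)
    show ?thesis using d nd fin by blast
  qed
  show ?thesis using fd ffin fnd gd gfin gnd partc by blast
qed


end
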